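(* Let $h>0$, $K>0$ and $g\in C(\mathbb{R}_+,\mathbb{R}_+)$ with $g(0)=0$, $g(K)=K$ and $\liminf_{x\to0+}g(x)/x>1$. Let $p_1,p_2$ satisfy $1<p_1<\liminf_{x\to0+}g(x)/x\le\limsup_{x\to0+}g(x)/x<p_2$, and for $i=1,2$ let $\lambda_i$ be the unique positive real root of $z=-1+p_ie^{-zh}$ (so $0<\lambda_1<\lambda_2$). Then for every nonnegative solution $\psi:\mathbb{R}\to\mathbb{R}_+$ of $x'(t)=-x(t)+g(x(t-h))$ with $\psi(-\infty)=0$ and $\psi(+\infty)=K$ there exist $\tau<0$ and $C_1,C_2>0$ such that $$C_1e^{\lambda_2t}\le\psi(t)\le C_2e^{\lambda_1t}\qquad\text{for all } t\le\tau.$$ *)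

theory Defs
  imports "HOL-Analysis.Analysis"
begin

end

theory Submission
  imports Defs
begin

lemma crossing:
  fixes D :: "real \<Rightarrow> real" and a b c :: real
  assumes cont: "continuous_on {a..b} D" and ac: "a \<le> c"
    and init: "\<forall>t. a \<le> t \<and> t \<le> c \<longrightarrow> D t > 0"
    and step: "\<And>t. c < t \<Longrightarrow> t \<le> b \<Longrightarrow> (\<forall>u. a \<le> u \<and> u < t \<longrightarrow> D u > 0) \<Longrightarrow> D t \<le> 0
                 \<Longrightarrow> \<exists>l>0. (D has_real_derivative l) (at t)"
  shows "\<forall>t. a \<le> t \<and> t \<le> b \<longrightarrow> D t > 0"
proof (rule ccontr)
  assume "\<not> ?thesis"
  then obtain t0 where t0: "a \<le> t0" "t0 \<le> b" "D t0 \<le> 0" by force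
  define S where "S = {a..b} \<inter> D -` {..0}"
  have cl: "closed S" unfolding S_def by (rule continuous_closed_preimage[OF cont]) auto
  have ne: "S \<noteq> {}" using t0 unfolding S_def by auto
  have bdd: "bdd_below S" unfolding S_def by (rule bdd_belowI[of _ a]) auto
  define ts where "ts = Inf S"
  have tsS: "ts \<in> S" using closed_contains_Inf[OF ne bdd cl] ts_def by simp
  hence ts: "a \<le> ts" "ts \<le> b" "D ts \<le> 0" unfolding S_def by auto
  have below: "\<forall>u. a \<le> u \<and> u < ts \<longrightarrow> D u > 0"
  proof (intro allI impI)
    fix u assume u: "a \<le> u \<and> u < ts"
    show "D u > 0"
    proof (rule ccontr)
      assume "\<not> D u > 0"
      hence "u \<in> S" using u ts unfolding S_def by auto
      hence "ts \<le> u" unfolding ts_def using bdd by (rule cInf_lower)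
      thus False using u by simp
    qed
  qed
  have cts: "c < ts" using init ts by force
  then obtain l where l: "l > 0" "(D has_real_derivative l) (at ts)" using step ts below by blast
  from DERIV_pos_inc_left[OF l(2) l(1)] obtain d where d: "d > 0" "\<forall>h>0. h < d \<longrightarrow> D (ts - h) < D ts" by blast
  define e where "e = min (d/2) ((ts - a)/2)"
  have e1: "e \<le> (ts - a)/2" unfolding e_def by (rule min.cobounded2)
  have e: "e > 0" "e < d" "ts - e < ts" using d cts ac by (auto simp: e_def)
  have "ts - e \<ge> a" using e1 cts ac by (auto simp: field_simps)
  then have "D (ts - e) < D ts" "D (ts-e) > 0" using d below e \<open>ts - e \<ge> a\<close> by auto
  thus False using ts by simp
qed

theorem lemma6:
  fixes h K p1 p2 lambda1 lambda2 :: real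
    and g psi :: "real \<Rightarrow> real"
  assumes h_pos: "h > 0" and K_pos: "K > 0"
    and g_cont: "continuous_on {0..} g"
    and g_nonneg: "\<forall>x\<ge>0. g x \<ge> 0"
    and g0: "g 0 = 0" and gK: "g K = K"
    and liminf_gt1: "Liminf (at_right 0) (\<lambda>x. ereal (g x / x)) > 1"
    and p1_gt1: "1 < p1"
    and p1_lt: "ereal p1 < Liminf (at_right 0) (\<lambda>x. ereal (g x / x))"
    and liminf_le_limsup: "Liminf (at_right 0) (\<lambda>x. ereal (g x / x))
                             \<le> Limsup (at_right 0) (\<lambda>x. ereal (g x / x))"
    and p2_gt: "Limsup (at_right 0) (\<lambda>x. ereal (g x / x)) < ereal p2"
    and lambda1_pos: "lambda1 > 0" and lambda1_root: "lambda1 = -1 + p1 * exp (- lambda1 * h)"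
    and lambda2_pos: "lambda2 > 0" and lambda2_root: "lambda2 = -1 + p2 * exp (- lambda2 * h)"
    and psi_nonneg: "\<forall>t. psi t \<ge> 0"
    and psi_sol: "\<forall>t. (psi has_real_derivative (- psi t + g (psi (t - h)))) (at t)"
    and psi_minus_inf: "(psi \<longlongrightarrow> 0) at_bot"
    and psi_plus_inf: "(psi \<longlongrightarrow> K) at_top"
  shows "\<exists>\<tau><0. \<exists>C1>0. \<exists>C2>0. \<forall>t\<le>\<tau>.
           C1 * exp (lambda2 * t) \<le> psi t \<and> psi t \<le> C2 * exp (lambda1 * t)"
proof -
  have deriv: "\<And>t. (psi has_real_derivative (- psi t + g (psi (t - h)))) (at t)" using psi_sol by blast
  have deriv': "\<And>t. (psi has_real_derivative (g (psi (t - h)) - psi t)) (at t)" using deriv by simp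
  have cont: "continuous_on S psi" for S
    using deriv by (meson DERIV_isCont continuous_at_imp_continuous_on)
  have gnn: "\<And>t. g (psi (t - h)) \<ge> 0" using g_nonneg psi_nonneg by blast
  have phi_deriv: "((\<lambda>x. exp x * psi x) has_real_derivative (exp t * g (psi (t-h)))) (at t)" for t
  proof -
    have "((\<lambda>x. exp x * psi x) has_real_derivative (exp t * psi t + (- psi t + g (psi (t - h))) * exp t)) (at t)"
      using DERIV_mult[OF DERIV_exp[of t] deriv[of t]] .
    moreover have "exp t * psi t + (- psi t + g (psi (t - h))) * exp t = exp t * g (psi (t-h))"
      by (simp add: algebra_simps)
    ultimately show ?thesis by simp
  qed
  have phi_mono: "\<And>x y. x \<le> y \<Longrightarrow> exp x * psi x \<le> exp y * psi y"
  proof -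
    fix x y :: real assume "x \<le> y"
    show "exp x * psi x \<le> exp y * psi y"
    proof (rule DERIV_nonneg_imp_nondecreasing[OF \<open>x \<le> y\<close>])
      fix z :: real
      show "\<exists>y. ((\<lambda>a. exp a * psi a) has_real_derivative y) (at z) \<and> 0 \<le> y"
        using phi_deriv[of z] gnn[of z] by (intro exI[of _ "exp z * g (psi (z-h))"]) simp
    qed
  qed
  have bwd: "\<And>u s. u \<le> s \<Longrightarrow> psi u \<le> exp (s - u) * psi s"
  proof -
    fix u s :: real assume "u \<le> s"
    have "exp u * psi u \<le> exp s * psi s" using phi_mono[OF \<open>u \<le> s\<close>] .
    hence "psi u \<le> exp s * psi s / exp u" by (simp add: field_simps)
    thus "psi u \<le> exp (s - u) * psi s" by (simp add: exp_diff)
  qed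
  have bwd2: "\<And>u s. u \<le> s \<Longrightarrow> exp (u - s) * psi u \<le> psi s"
  proof -
    fix u s :: real assume "u \<le> s"
    have "exp u * psi u \<le> exp s * psi s" using phi_mono[OF \<open>u \<le> s\<close>] .
    hence "exp u * psi u / exp s \<le> psi s" by (simp add: field_simps)
    thus "exp (u - s) * psi u \<le> psi s" by (simp add: exp_diff)
  qed
  have zero_all: "psi t = 0" if a0: "psi a = 0" for a t
  proof -
    have z0: "psi u = 0" if "u \<le> a" for u
      using bwd[OF that] a0 psi_nonneg by (metis mult_zero_right order_antisym)
    have zn: "\<forall>u. u \<le> a + real n * h \<longrightarrow> psi u = 0" for n
    proof (induction n)
      case 0 then show ?case using z0 by simp
    next
      case (Suc n)
      show ?case
      proof (intro allI impI)
        fix u assume u: "u \<le> a + real (Suc n) * h"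
        show "psi u = 0"
        proof (cases "u \<le> a + real n * h")
          case True then show ?thesis using Suc by blast
        next
          case False
          define b0 where "b0 = a + real n * h"
          have "b0 < u" using False b0_def by simp
          have "exp u * psi u = exp b0 * psi b0"
          proof (rule DERIV_isconst_end[OF \<open>b0 < u\<close>])
            show "continuous_on {b0..u} (\<lambda>x. exp x * psi x)"
              by (intro continuous_intros cont)
            fix x assume x: "b0 < x" "x < u"
            have "x - h \<le> a + real n * h" using x u by (simp add: algebra_simps b0_def)
            hence "psi (x - h) = 0" using Suc by blast
            thus "((\<lambda>x. exp x * psi x) has_real_derivative 0) (at x)" using phi_deriv[of x] g0 by simp
          qed
          moreover have "psi b0 = 0" using Suc b0_def by simp
          ultimately show ?thesis by simp
        qed
      qed
    qed
    obtain n :: nat where "(t - a) / h \<le> real n" using real_arch_simple by blast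
    hence "t - a \<le> real n * h" using h_pos by (simp add: field_simps)
    thus ?thesis using zn[of n] by simp
  qed
  have pos: "\<And>t. psi t > 0"
  proof (rule ccontr)
    fix t assume "\<not> psi t > 0"
    hence "psi t = 0" using psi_nonneg by (meson order_antisym not_less)
    hence "psi = (\<lambda>_. 0)" using zero_all by blast
    hence "((\<lambda>_::real. 0::real) \<longlongrightarrow> K) at_top" using psi_plus_inf by simp
    hence "K = 0" by (simp add: tendsto_const_iff)
    thus False using K_pos by simp
  qed
  obtain d1 where d1: "d1 > 0" "\<And>x. 0 \<le> x \<Longrightarrow> x < d1 \<Longrightarrow> p1 * x \<le> g x"
  proof -
    have "eventually (\<lambda>x. ereal p1 < ereal (g x / x)) (at_right (0::real))"
      using less_LiminfD[OF p1_lt] .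
    then obtain b where b: "b > 0" "\<And>y. y > 0 \<Longrightarrow> y < b \<Longrightarrow> ereal p1 < ereal (g y / y)"
      unfolding eventually_at_right_field by auto
    have "p1 * x \<le> g x" if "0 \<le> x" "x < b" for x
    proof (cases "x = 0")
      case True then show ?thesis using g0 by simp
    next
      case False
      hence "x > 0" using that by simp
      hence "p1 < g x / x" using b that by simp
      thus ?thesis using \<open>x > 0\<close> by (simp add: pos_less_divide_eq less_imp_le)
    qed
    thus ?thesis using that b by blast
  qed
  obtain d2 where d2: "d2 > 0" "\<And>x. 0 \<le> x \<Longrightarrow> x < d2 \<Longrightarrow> g x \<le> p2 * x"
  proof -
    have "eventually (\<lambda>x. ereal (g x / x) < ereal p2) (at_right (0::real))"
      using Limsup_lessD[OF p2_gt] .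
    then obtain b where b: "b > 0" "\<And>y. y > 0 \<Longrightarrow> y < b \<Longrightarrow> ereal (g y / y) < ereal p2"
      unfolding eventually_at_right_field by auto
    have "g x \<le> p2 * x" if "0 \<le> x" "x < b" for x
    proof (cases "x = 0")
      case True then show ?thesis using g0 by simp
    next
      case False
      hence "x > 0" using that by simp
      hence "g x / x < p2" using b that by simp
      thus ?thesis using \<open>x > 0\<close> by (simp add: pos_divide_less_eq less_imp_le)
    qed
    thus ?thesis using that b by blast
  qed
  obtain T where T: "\<And>t. t \<le> T \<Longrightarrow> psi t < min d1 d2"
  proof -
    have "eventually (\<lambda>t. dist (psi t) 0 < min d1 d2) at_bot"
      using tendstoD[OF psi_minus_inf, of "min d1 d2"] d1 d2 by simp
    then obtain N where "\<forall>t\<le>N. dist (psi t) 0 < min d1 d2" unfolding eventually_at_bot_linorder by blast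
    thus ?thesis using that psi_nonneg by (auto simp: dist_real_def)
  qed
  define \<tau> where "\<tau> = min T (-1)"
  have tau_neg: "\<tau> < 0" by (simp add: \<tau>_def)
  have smallt: "\<And>t. t \<le> \<tau> \<Longrightarrow> psi t < d1 \<and> psi t < d2" using T \<tau>_def by fastforce
  have p1pos: "p1 > 0" using p1_gt1 by simp
  have p2pos: "p2 > 0"
  proof -
    have "p2 * exp (- lambda2 * h) > 0" using lambda2_root lambda2_pos by linarith
    thus ?thesis by (simp add: zero_less_mult_iff)
  qed
  have r1: "p1 * exp (- lambda1 * h) = 1 + lambda1" using lambda1_root by simp
  have r2: "p2 * exp (- lambda2 * h) = 1 + lambda2" using lambda2_root by simp

  have up: "psi s \<le> C2 * exp (lambda1 * s)"
    if s: "s \<le> \<tau>" and C2def: "C2 = 2 * psi \<tau> * exp (h + lambda1 * h - lambda1 * \<tau>)" for s C2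
  proof -
    define a where "a = psi s * exp (- (h + lambda1 * (s + h))) / 2"
    have apos: "a > 0" using pos[of s] by (simp add: a_def)
    have key: "\<forall>t. s \<le> t \<and> t \<le> \<tau> \<longrightarrow> (\<lambda>t. psi t - a * exp (lambda1 * t)) t > 0"
    proof (rule crossing[where c = "s + h"])
      show "continuous_on {s..\<tau>} (\<lambda>t. psi t - a * exp (lambda1 * t))"
        by (intro continuous_intros cont)
      show "s \<le> s + h" using h_pos by simp
      show "\<forall>t. s \<le> t \<and> t \<le> s + h \<longrightarrow> 0 < psi t - a * exp (lambda1 * t)"
      proof (intro allI impI)
        fix t assume t: "s \<le> t \<and> t \<le> s + h"
        have "a * exp (lambda1 * t) \<le> a * exp (lambda1 * (s + h))"
          using t apos lambda1_pos by (simp add: mult_left_mono)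
        also have "\<dots> = psi s * exp (- h) / 2"
          by (simp add: a_def mult_exp_exp)
        also have "\<dots> < psi s * exp (- h)" using pos[of s] by simp
        also have "\<dots> \<le> exp (s - t) * psi s"
          using t pos[of s] by (simp add: mult.commute mult_left_mono)
        also have "\<dots> \<le> psi t" using bwd2[of s t] t by simp
        finally show "0 < psi t - a * exp (lambda1 * t)" by simp
      qed
    next
      fix t assume t: "s + h < t" "t \<le> \<tau>" and bel: "\<forall>u. s \<le> u \<and> u < t \<longrightarrow> 0 < psi u - a * exp (lambda1 * u)"
        and le0: "psi t - a * exp (lambda1 * t) \<le> 0"
      have dd: "((\<lambda>t. psi t - a * exp (lambda1 * t)) has_real_derivative
           (- psi t + g (psi (t - h)) - a * (exp (lambda1 * t) * lambda1))) (at t)"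
        using deriv'[of t] by (auto intro!: derivative_eq_intros)
      have h1: "psi (t - h) > a * exp (lambda1 * (t - h))" using bel[rule_format, of "t - h"] t h_pos by simp
      have h2: "g (psi (t - h)) \<ge> p1 * psi (t - h)"
        using d1(2)[of "psi (t - h)"] smallt[of "t - h"] t h_pos psi_nonneg by simp
      have e1: "exp (lambda1 * (t - h)) = exp (lambda1 * t) * exp (- lambda1 * h)"
        by (simp add: mult_exp_exp algebra_simps)
      have "p1 * psi (t - h) > p1 * (a * exp (lambda1 * (t - h)))" using h1 p1pos by simp
      also have "p1 * (a * exp (lambda1 * (t - h))) = a * exp (lambda1 * t) * (1 + lambda1)"
        unfolding e1 r1[symmetric] by (simp only: ac_simps)
      finally have "- psi t + g (psi (t - h)) - a * (exp (lambda1 * t) * lambda1) > 0"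
        using h2 le0 by (simp add: algebra_simps)
      thus "\<exists>l>0. ((\<lambda>t. psi t - a * exp (lambda1 * t)) has_real_derivative l) (at t)" using dd by blast
    qed
    have "psi \<tau> > a * exp (lambda1 * \<tau>)" using key s by auto
    hence "psi \<tau> > psi s * (exp (- (h + lambda1 * (s + h))) * exp (lambda1 * \<tau>)) / 2" by (simp add: a_def)
    also have "exp (- (h + lambda1 * (s + h))) * exp (lambda1 * \<tau>) = exp (- (h + lambda1 * h - lambda1 * \<tau> + lambda1 * s))"
      by (simp add: mult_exp_exp algebra_simps)
    finally have "psi s * exp (- (h + lambda1 * h - lambda1 * \<tau> + lambda1 * s)) < 2 * psi \<tau>" by simp
    hence "psi s * exp (- (h + lambda1 * h - lambda1 * \<tau> + lambda1 * s)) * exp (h + lambda1 * h - lambda1 * \<tau> + lambda1 * s)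
           < 2 * psi \<tau> * exp (h + lambda1 * h - lambda1 * \<tau> + lambda1 * s)"
      by (rule mult_strict_right_mono) simp
    hence "psi s < 2 * psi \<tau> * exp (h + lambda1 * h - lambda1 * \<tau> + lambda1 * s)"
      by (simp only: mult.assoc mult_exp_exp) simp
    also have "\<dots> = C2 * exp (lambda1 * s)" by (simp add: C2def mult_exp_exp[symmetric])
    finally show ?thesis by simp
  qed
  have low: "C1 * exp (lambda2 * s) \<le> psi s"
    if s: "s \<le> \<tau>" and C1def: "C1 = psi \<tau> * exp (- (h + lambda2 * h + lambda2 * \<tau>)) / 2" for s C1
  proof -
    define A where "A = 2 * exp h * psi s * exp (- (lambda2 * (s - h)))"
    have Apos: "A > 0" using pos[of s] by (simp add: A_def)
    have key: "\<forall>t. s - h \<le> t \<and> t \<le> \<tau> \<longrightarrow> (\<lambda>t. A * exp (lambda2 * t) - psi t) t > 0"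
    proof (rule crossing[where c = "s"])
      show "continuous_on {s - h..\<tau>} (\<lambda>t. A * exp (lambda2 * t) - psi t)"
        by (intro continuous_intros cont)
      show "s - h \<le> s" using h_pos by simp
      show "\<forall>t. s - h \<le> t \<and> t \<le> s \<longrightarrow> 0 < A * exp (lambda2 * t) - psi t"
      proof (intro allI impI)
        fix t assume t: "s - h \<le> t \<and> t \<le> s"
        have "psi t \<le> exp (s - t) * psi s" using bwd[of t s] t by simp
        also have "\<dots> \<le> exp h * psi s" using t pos[of s] by (simp add: mult_right_mono)
        also have "\<dots> < 2 * exp h * psi s" using pos[of s] by simp
        also have "\<dots> = A * exp (lambda2 * (s - h))" by (simp add: A_def mult_exp_exp)
        also have "\<dots> \<le> A * exp (lambda2 * t)"
          using t Apos lambda2_pos by (simp add: mult_left_mono)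
        finally show "0 < A * exp (lambda2 * t) - psi t" by simp
      qed
    next
      fix t assume t: "s < t" "t \<le> \<tau>" and bel: "\<forall>u. s - h \<le> u \<and> u < t \<longrightarrow> 0 < A * exp (lambda2 * u) - psi u"
        and le0: "A * exp (lambda2 * t) - psi t \<le> 0"
      have dd: "((\<lambda>t. A * exp (lambda2 * t) - psi t) has_real_derivative
           (A * (exp (lambda2 * t) * lambda2) - (- psi t + g (psi (t - h))))) (at t)"
        using deriv'[of t] by (auto intro!: derivative_eq_intros)
      have h1: "psi (t - h) < A * exp (lambda2 * (t - h))" using bel[rule_format, of "t - h"] t h_pos by simp
      have h2: "g (psi (t - h)) \<le> p2 * psi (t - h)"
        using d2(2)[of "psi (t - h)"] smallt[of "t - h"] t h_pos psi_nonneg by simp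
      have e1: "exp (lambda2 * (t - h)) = exp (lambda2 * t) * exp (- lambda2 * h)"
        by (simp add: mult_exp_exp algebra_simps)
      have "p2 * psi (t - h) < p2 * (A * exp (lambda2 * (t - h)))" using h1 p2pos by simp
      also have "p2 * (A * exp (lambda2 * (t - h))) = A * exp (lambda2 * t) * (1 + lambda2)"
        unfolding e1 r2[symmetric] by (simp only: ac_simps)
      finally have "A * (exp (lambda2 * t) * lambda2) - (- psi t + g (psi (t - h))) > 0"
        using h2 le0 by (simp add: algebra_simps)
      thus "\<exists>l>0. ((\<lambda>t. A * exp (lambda2 * t) - psi t) has_real_derivative l) (at t)" using dd by blast
    qed
    have "psi \<tau> < A * exp (lambda2 * \<tau>)" using key s h_pos by auto
    also have "A * exp (lambda2 * \<tau>) = 2 * psi s * exp (h + lambda2 * h + lambda2 * \<tau> - lambda2 * s)"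
      by (simp add: A_def mult_exp_exp algebra_simps)
    finally have "psi \<tau> < 2 * psi s * exp (h + lambda2 * h + lambda2 * \<tau> - lambda2 * s)" .
    hence "psi \<tau> * exp (- (h + lambda2 * h + lambda2 * \<tau> - lambda2 * s)) <
         2 * psi s * exp (h + lambda2 * h + lambda2 * \<tau> - lambda2 * s) * exp (- (h + lambda2 * h + lambda2 * \<tau> - lambda2 * s))"
      by (rule mult_strict_right_mono) simp
    hence "psi \<tau> * exp (- (h + lambda2 * h + lambda2 * \<tau> - lambda2 * s)) < 2 * psi s"
      by (simp only: mult.assoc mult_exp_exp) simp
    hence "psi \<tau> * exp (- (h + lambda2 * h + lambda2 * \<tau> - lambda2 * s)) / 2 < psi s"
      by simp
    moreover have "psi \<tau> * exp (- (h + lambda2 * h + lambda2 * \<tau> - lambda2 * s)) / 2 = C1 * exp (lambda2 * s)"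
      by (simp add: C1def mult_exp_exp algebra_simps)
    ultimately show ?thesis by simp
  qed
  show ?thesis
  proof (intro exI conjI allI impI)
    show "\<tau> < 0" by (rule tau_neg)
    show "psi \<tau> * exp (- (h + lambda2 * h + lambda2 * \<tau>)) / 2 > 0" using pos[of \<tau>] by simp
    show "2 * psi \<tau> * exp (h + lambda1 * h - lambda1 * \<tau>) > 0" using pos[of \<tau>] by simp
    fix t assume "t \<le> \<tau>"
    show "psi \<tau> * exp (- (h + lambda2 * h + lambda2 * \<tau>)) / 2 * exp (lambda2 * t) \<le> psi t"
      using low[OF \<open>t \<le> \<tau>\<close> refl] .
    show "psi t \<le> 2 * psi \<tau> * exp (h + lambda1 * h - lambda1 * \<tau>) * exp (lambda1 * t)"
      using up[OF \<open>t \<le> \<tau>\<close> refl] .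
  qed
qed
end
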